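(* Every admissible Poisson algebra $(\mathcal{P},\cdot)$ is power associative: for every $X\in\mathcal{P}$, defining $X^1=X$ and $X^{i+1}=X\cdot X^i$, one has $X^i\cdot X^j=X^{i+j}$ for all $i,j\ge 1$; in particular the subalgebra generated by any single element is associative.
   Context: $\mathbb{K}$ is a field of characteristic different from $2$ and $3$. For a bilinear product $\cdot$ on $\mathcal{P}$, its associator is $A(X,Y,Z)=(X\cdot Y)\cdot Z-X\cdot(Y\cdot Z)$. An admissible Poisson algebra is a $\mathbb{K}$-vector space $\mathcal{P}$ with a bilinear product $\cdot$ (not assumed associative) satisfying, for all $X,Y,Z$, $3A(X,Y,Z)=(X\cdot Z)\cdot Y+(Y\cdot Z)\cdot X-(Y\cdot X)\cdot Z-(Z\cdot X)\cdot Y$. *)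

theory Defs
  imports Main "HOL.Vector_Spaces"
begin

definition bilinear_prod :: "('k::field \<Rightarrow> 'p::ab_group_add \<Rightarrow> 'p) \<Rightarrow> ('p \<Rightarrow> 'p \<Rightarrow> 'p) \<Rightarrow> bool" where
  "bilinear_prod scale m \<longleftrightarrow>
     (\<forall>x. Vector_Spaces.linear scale scale (m x)) \<and>
     (\<forall>y. Vector_Spaces.linear scale scale (\<lambda>x. m x y))"

definition associator :: "('p \<Rightarrow> 'p \<Rightarrow> 'p) \<Rightarrow> 'p \<Rightarrow> 'p \<Rightarrow> 'p \<Rightarrow> 'p::ab_group_add" where
  "associator m X Y Z = m (m X Y) Z - m X (m Y Z)"

definition admissible_poisson :: "('k::field \<Rightarrow> 'p::ab_group_add \<Rightarrow> 'p) \<Rightarrow> ('p \<Rightarrow> 'p \<Rightarrow> 'p) \<Rightarrow> bool" where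
  "admissible_poisson scale m \<longleftrightarrow>
     vector_space scale \<and> bilinear_prod scale m \<and>
     (\<forall>X Y Z. scale 3 (associator m X Y Z) =
        m (m X Z) Y + m (m Y Z) X - m (m Y X) Z - m (m Z X) Y)"

text \<open>Powers: ppow m X i = X^i for i \<ge> 1, with X^1 = X and X^(i+1) = X \<cdot> X^i.
  (The value at 0 is unspecified and never used.)\<close>
fun ppow :: "('p \<Rightarrow> 'p \<Rightarrow> 'p) \<Rightarrow> 'p \<Rightarrow> nat \<Rightarrow> 'p" where
  "ppow m X (Suc 0) = X"
| "ppow m X (Suc (Suc n)) = m X (ppow m X (Suc n))"

definition gen_subalg :: "('k::field \<Rightarrow> 'p::ab_group_add \<Rightarrow> 'p) \<Rightarrow> ('p \<Rightarrow> 'p \<Rightarrow> 'p) \<Rightarrow> 'p \<Rightarrow> 'p set" where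
  "gen_subalg scale m X =
     \<Inter>{S. module.subspace scale S \<and> X \<in> S \<and> (\<forall>a\<in>S. \<forall>b\<in>S. m a b \<in> S)}"

end

theory Submission
  imports Defs
begin

locale apa = vector_space scale
  for scale :: "'k::field \<Rightarrow> 'p::ab_group_add \<Rightarrow> 'p" +
  fixes m :: "'p \<Rightarrow> 'p \<Rightarrow> 'p"
  assumes bil: "bilinear_prod scale m"
    and ident: "\<And>X Y Z. scale 3 (associator m X Y Z) =
        m (m X Z) Y + m (m Y Z) X - m (m Y X) Z - m (m Z X) Y"
    and two: "(2::'k) \<noteq> 0" and three: "(3::'k) \<noteq> 0"
begin

lemma ladd: "m x (a + b) = m x a + m x b"
  and lscale: "m x (scale c a) = scale c (m x a)"
  and radd: "m (a + b) y = m a y + m b y"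
  and rscale: "m (scale c a) y = scale c (m a y)"
  using bil unfolding bilinear_prod_def linear_iff by auto

lemma lzero: "m x 0 = 0" using ladd[of x 0 0] by simp
lemma rzero: "m 0 y = 0" using radd[of 0 0 y] by simp
lemma ldiff: "m x (a - b) = m x a - m x b"
proof -
  interpret additive "m x" by standard (rule ladd)
  show ?thesis by (rule diff)
qed
lemma rdiff: "m (a - b) y = m a y - m b y"
proof -
  interpret additive "\<lambda>a. m a y" by standard (rule radd)
  show ?thesis by (rule diff)
qed

lemma s3: "scale 3 v = v + v + v"
proof -
  have "scale (1+1+1) v = v + v + v" by (simp only: scale_left_distrib scale_one)
  moreover have "(3::'k) = 1+1+1" by simp
  ultimately show ?thesis by metis
qed

lemma s2: "scale 2 v = v + v"
proof -
  have "scale (1+1) v = v + v" by (simp only: scale_left_distrib scale_one)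
  moreover have "(2::'k) = 1+1" by simp
  ultimately show ?thesis by metis
qed

lemma s4: "scale 4 v = v + v + v + v"
proof -
  have "scale (1+1+1+1) v = v + v + v + v" by (simp only: scale_left_distrib scale_one)
  moreover have "(4::'k) = 1+1+1+1" by simp
  ultimately show ?thesis by metis
qed

definition E where "E X Y Z = (m (m X Y) Z - m X (m Y Z)) + (m (m X Y) Z - m X (m Y Z)) + (m (m X Y) Z - m X (m Y Z))
   - (m (m X Z) Y + m (m Y Z) X - m (m Y X) Z - m (m Z X) Y)"

lemma identE: "E X Y Z = 0"
  using ident[of X Y Z] unfolding E_def associator_def s3 by simp

lemma identE_old: "(m (m X Y) Z - m X (m Y Z)) + (m (m X Y) Z - m X (m Y Z)) + (m (m X Y) Z - m X (m Y Z))
   - (m (m X Z) Y + m (m Y Z) X - m (m Y X) Z - m (m Z X) Y) = 0"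
  using ident[of X Y Z] unfolding associator_def s3 by simp

definition S where "S a b = m a b + m b a"
definition K where "K a b = m a b - m b a"

lemma assocS: "S (S a b) c = S a (S b c)"
proof -
  let ?T = "S (S a b) c - S a (S b c)"
  have "?T + ?T + ?T = E a b c + E a c b - E c a b - E c b a"
    unfolding S_def ladd radd E_def
    by (simp add: algebra_simps)
  then have "?T + ?T + ?T = 0" by (simp add: identE)
  then have "scale 3 ?T = scale 3 0" by (simp add: s3)
  then show ?thesis using three by simp
qed

lemma leib: "K a (S b c) = S (K a b) c + S b (K a c)"
proof -
  let ?T = "K a (S b c) - (S (K a b) c + S b (K a c))"
  have "?T + ?T + ?T = - (E a b c + E a c b - E b a c + E b c a - E c a b + E c b a)"
    unfolding S_def K_def ladd radd ldiff rdiff E_def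
    by (simp add: algebra_simps)
  then have "?T + ?T + ?T = 0" by (simp add: identE)
  then have "scale 3 ?T = scale 3 0" by (simp add: s3)
  then show ?thesis using three by simp
qed

lemma K_sub: "subspace {b. K a b = 0}"
  unfolding subspace_def K_def
  by (auto simp: lzero rzero ladd radd lscale rscale algebra_simps)

lemma K_closed: "K a b = 0 \<Longrightarrow> K a c = 0 \<Longrightarrow> K a (S b c) = 0"
  by (simp only: leib) (simp add: S_def lzero rzero)

lemma K_anti: "K a b = 0 \<Longrightarrow> K b a = 0"
  unfolding K_def by simp

definition C where "C X = \<Inter>{U. subspace U \<and> X \<in> U \<and> (\<forall>a\<in>U. \<forall>b\<in>U. S a b \<in> U)}"

lemma C_lower: "subspace U \<Longrightarrow> X \<in> U \<Longrightarrow> (\<forall>a\<in>U. \<forall>b\<in>U. S a b \<in> U) \<Longrightarrow> C X \<subseteq> U"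
  unfolding C_def by blast

lemma C_sub: "subspace (C X)"
  unfolding C_def by (rule subspace_Inter) blast

lemma C_X: "X \<in> C X" unfolding C_def by blast

lemma C_S: "a \<in> C X \<Longrightarrow> b \<in> C X \<Longrightarrow> S a b \<in> C X" unfolding C_def by blast

lemma C_comm1: "b \<in> C X \<Longrightarrow> K X b = 0"
proof -
  have "C X \<subseteq> {b. K X b = 0}"
    by (rule C_lower) (auto intro: K_sub K_closed simp: K_def[of X X])
  then show "b \<in> C X \<Longrightarrow> K X b = 0" by blast
qed

lemma C_comm: "a \<in> C X \<Longrightarrow> b \<in> C X \<Longrightarrow> m a b = m b a"
proof -
  assume a: "a \<in> C X" and b: "b \<in> C X"
  have "C X \<subseteq> {b. K a b = 0}"
    by (rule C_lower) (auto simp: K_sub K_closed intro: K_anti C_comm1 a)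
  then show ?thesis using b unfolding K_def by auto
qed

lemma C_m: "a \<in> C X \<Longrightarrow> b \<in> C X \<Longrightarrow> m a b \<in> C X"
proof -
  assume a: "a \<in> C X" and b: "b \<in> C X"
  have "S a b = scale 2 (m a b)" using C_comm[OF a b] by (simp add: S_def s2)
  then have "scale (1/2) (S a b) = m a b" using two by simp
  moreover have "scale (1/2) (S a b) \<in> C X" using C_S[OF a b] C_sub subspace_scale by blast
  ultimately show ?thesis by simp
qed

lemma C_assoc: "a \<in> C X \<Longrightarrow> b \<in> C X \<Longrightarrow> c \<in> C X \<Longrightarrow> m (m a b) c = m a (m b c)"
proof -
  assume a: "a \<in> C X" and b: "b \<in> C X" and c: "c \<in> C X"
  have ab: "m a b = m b a" and bc: "m b c = m c b" and abc: "m (m a b) c = m c (m a b)"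
    and bca: "m a (m b c) = m (m b c) a"
    using C_comm a b c C_m by blast+
  have "S (S a b) c = scale 4 (m (m a b) c)"
    unfolding S_def s4 using ab abc by (simp add: ladd radd)
  moreover have "S a (S b c) = scale 4 (m a (m b c))"
    unfolding S_def s4 using bc bca by (simp add: ladd radd)
  ultimately have "scale 4 (m (m a b) c) = scale 4 (m a (m b c))" by (metis assocS)
  moreover have "(4::'k) \<noteq> 0" using two
    by (metis mult_eq_0_iff numeral_Bit0_eq_double mult_2)
  ultimately show ?thesis by (metis scale_cancel_left)
qed

lemma gen_C: "gen_subalg scale m X \<subseteq> C X"
  unfolding gen_subalg_def using C_sub C_X C_m by blast

lemma gen_X: "X \<in> gen_subalg scale m X" unfolding gen_subalg_def by blast
lemma gen_m: "a \<in> gen_subalg scale m X \<Longrightarrow> b \<in> gen_subalg scale m X \<Longrightarrow> m a b \<in> gen_subalg scale m X"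
  unfolding gen_subalg_def by blast

lemma gen_assoc: "a \<in> gen_subalg scale m X \<Longrightarrow> b \<in> gen_subalg scale m X \<Longrightarrow> c \<in> gen_subalg scale m X
   \<Longrightarrow> m (m a b) c = m a (m b c)"
  using gen_C C_assoc by blast

lemma pow_gen: "ppow m X (Suc n) \<in> gen_subalg scale m X"
  by (induction n) (auto simp: gen_X gen_m)

lemma pow_mult: "m (ppow m X (Suc i)) (ppow m X (Suc j)) = ppow m X (Suc i + Suc j)"
proof (induction i)
  case 0
  then show ?case by simp
next
  case (Suc i)
  have "m (ppow m X (Suc (Suc i))) (ppow m X (Suc j)) = m (m X (ppow m X (Suc i))) (ppow m X (Suc j))"
    by simp
  also have "\<dots> = m X (m (ppow m X (Suc i)) (ppow m X (Suc j)))"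
    using gen_assoc[OF gen_X pow_gen pow_gen] .
  also have "\<dots> = ppow m X (Suc (Suc i) + Suc j)" using Suc by simp
  finally show ?case .
qed

end

lemma char_ne: assumes "CHAR('k::field) \<noteq> p" "p = 2 \<or> p = 3" shows "(of_nat p :: 'k) \<noteq> 0"
proof
  assume "(of_nat p :: 'k) = 0"
  then have d: "CHAR('k) dvd p" by (simp add: of_nat_eq_0_iff_char_dvd)
  then have "CHAR('k) \<le> p" using assms(2) by (intro dvd_imp_le) auto
  then have "CHAR('k) = 0 \<or> CHAR('k) = 1 \<or> CHAR('k) = 2 \<or> CHAR('k) = 3" using assms(2) by arith
  with assms d have "CHAR('k) = 1" by auto
  then have "(of_nat 1 :: 'k) = 0" by (simp only: of_nat_eq_0_iff_char_dvd) simp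
  then show False by simp
qed

theorem mainTheorem3:
  fixes scale :: "'k::field \<Rightarrow> 'p::ab_group_add \<Rightarrow> 'p"
    and m :: "'p \<Rightarrow> 'p \<Rightarrow> 'p"
  assumes "CHAR('k) \<noteq> 2" and "CHAR('k) \<noteq> 3"
    and "admissible_poisson scale m"
  shows "(\<forall>X i j. 1 \<le> i \<longrightarrow> 1 \<le> j \<longrightarrow> m (ppow m X i) (ppow m X j) = ppow m X (i + j))
       \<and> (\<forall>X. \<forall>a\<in>gen_subalg scale m X. \<forall>b\<in>gen_subalg scale m X. \<forall>c\<in>gen_subalg scale m X.
              m (m a b) c = m a (m b c))"
proof -
  have t2: "(2::'k) \<noteq> 0" using char_ne[OF assms(1)] by simp
  have t3: "(3::'k) \<noteq> 0" using char_ne[OF assms(2)] by simp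
  interpret apa scale m
    using assms(3) t2 t3 unfolding admissible_poisson_def
    by (simp add: apa_def apa_axioms_def)
  show ?thesis
  proof (intro conjI allI impI ballI)
    fix X and i j :: nat assume "1 \<le> i" "1 \<le> j"
    then obtain i' j' where "i = Suc i'" "j = Suc j'" by (metis Suc_le_D One_nat_def)
    then show "m (ppow m X i) (ppow m X j) = ppow m X (i + j)" using pow_mult by simp
  next
    fix X a b c assume "a \<in> gen_subalg scale m X" "b \<in> gen_subalg scale m X" "c \<in> gen_subalg scale m X"
    then show "m (m a b) c = m a (m b c)" by (rule gen_assoc)
  qed
qed

end
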